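(* For the Lr $(\mathbf a,\tau)$ interval exchange transformation $T$ and its dual $\tilde T$, one has $D\cap T^k(D)=\emptyset$ for all $k\in\mathbb N$ if and only if $D\cap\tilde T^k(D)=\emptyset$ for all $k\in\mathbb N$.
   Context: Fix $n\ge 2$, $[n]=\{1,\dots,n\}$, a vector $\mathbf a=(a_1,\dots,a_n)$ with all $a_i>0$ and $\sum_i a_i=1$, and a permutation $\tau$ of $[n]$. Put $b_0=0$, $b_i=\sum_{j=1}^i a_j$, $J_i=[b_{i-1},b_i)$, $\tilde J_i=(b_{i-1},b_i]$, $D=\{b_1,\dots,b_{n-1}\}$, $b^\tau_0=0$, $b^\tau_i=\sum_{j=1}^i a_{\tau^{-1}(j)}$. $T:[0,1)\to[0,1)$ and $\tilde T:(0,1]\to(0,1]$ are defined by $x\mapsto x-b_{i-1}+b^\tau_{\tau(i)-1}$ for $x\in J_i$ (resp. $x\in\tilde J_i$). *)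

theory Defs
  imports Complex_Main "HOL-Combinatorics.Permutations"
begin

definition bpt :: "(nat \<Rightarrow> real) \<Rightarrow> nat \<Rightarrow> real" where
  "bpt a i = (\<Sum>j=1..i. a j)"

definition btau :: "(nat \<Rightarrow> real) \<Rightarrow> (nat \<Rightarrow> nat) \<Rightarrow> nat \<Rightarrow> real" where
  "btau a \<tau> i = (\<Sum>j=1..i. a (inv \<tau> j))"

definition Dset :: "nat \<Rightarrow> (nat \<Rightarrow> real) \<Rightarrow> real set" where
  "Dset n a = bpt a ` {1..n-1}"

text \<open>The interval exchange T on [0,1), intervals J_i = [b_{i-1}, b_i).
  Outside [0,1) it is set to the identity (irrelevant).\<close>
definition iet :: "nat \<Rightarrow> (nat \<Rightarrow> real) \<Rightarrow> (nat \<Rightarrow> nat) \<Rightarrow> real \<Rightarrow> real" where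
  "iet n a \<tau> x =
    (if 0 \<le> x \<and> x < 1 then
       (let i = (THE i. i \<in> {1..n} \<and> bpt a (i-1) \<le> x \<and> x < bpt a i)
        in x - bpt a (i-1) + btau a \<tau> (\<tau> i - 1))
     else x)"

definition iet_dual :: "nat \<Rightarrow> (nat \<Rightarrow> real) \<Rightarrow> (nat \<Rightarrow> nat) \<Rightarrow> real \<Rightarrow> real" where
  "iet_dual n a \<tau> x =
    (if 0 < x \<and> x \<le> 1 then
       (let i = (THE i. i \<in> {1..n} \<and> bpt a (i-1) < x \<and> x \<le> bpt a i)
        in x - bpt a (i-1) + btau a \<tau> (\<tau> i - 1))
     else x)"

end

theory Submission
  imports Defs
begin

lemma funpow_in:
  assumes "\<forall>x\<in>S. f x \<in> S" "q \<in> S"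
  shows "(f^^j) q \<in> S"
  using assms by (induction j) auto

lemma abstract_conn:
  fixes f g :: "real \<Rightarrow> real" and D Df Dg :: "real set" and e :: real
  assumes DD: "D \<subseteq> Df" "D \<subseteq> Dg"
   and gm: "\<forall>x\<in>Dg. g x \<in> Dg" and fm: "\<forall>x\<in>Df. f x \<in> Df"
   and eg: "e \<in> Dg" and ef: "e \<notin> Df"
   and agree: "\<forall>x\<in>Dg - D - {e}. f x = g x"
   and cc: "\<forall>z\<in>D\<union>{e}. g z \<noteq> e \<longrightarrow> (\<exists>q\<in>D. \<exists>j\<in>{1,2}. (f^^j) q = g z)"
   and dd: "\<forall>z\<in>D. g z = e \<longrightarrow> g e \<noteq> e"
   and conn: "d \<in> D" "k \<ge> 1" "(g^^k) d \<in> D"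
  shows "\<exists>d\<in>D. \<exists>k\<ge>1. (f^^k) d \<in> D"
proof -
  have C: "\<And>y. y \<in> Dg \<Longrightarrow> (\<exists>q\<in>D. \<exists>j\<ge>1. (f^^j) q = y) \<Longrightarrow> (g^^m) y \<in> D
      \<Longrightarrow> \<exists>d\<in>D. \<exists>k\<ge>1. (f^^k) d \<in> D" for m
  proof (induction m)
    case 0
    then show ?case by auto
  next
    case (Suc m)
    from Suc.prems(2) obtain q j where q: "q \<in> D" "j \<ge> 1" "(f^^j) q = y" by blast
    show ?case
    proof (cases "y \<in> D")
      case True then show ?thesis using q by blast
    next
      case False
      have "y \<noteq> e"
        using funpow_in[OF fm, of q j] q DD ef by auto
      then have "f y = g y" using agree False Suc.prems(1) by auto
      then have "(f^^(Suc j)) q = g y" using q by simp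
      moreover have "g y \<in> Dg" using gm Suc.prems(1) by auto
      moreover have "(g^^m) (g y) \<in> D" using Suc.prems(3) by (simp add: funpow_Suc_right del: funpow.simps)
      ultimately show ?thesis using Suc.IH q by (meson le_SucI)
    qed
  qed
  have fj: "\<exists>q\<in>D. \<exists>j\<ge>1. (f^^j) q = w" if "\<exists>q\<in>D. \<exists>j\<in>{1,2}. (f^^j) q = w" for w
  proof -
    from that obtain q where q: "q \<in> D" "\<exists>j\<in>{1,2}. (f^^j) q = w" by (rule bexE)
    from q(2) obtain j where j: "j \<in> {1,2}" "(f^^j) q = w" by (rule bexE)
    from j(1) have "j \<ge> 1" by auto
    then show ?thesis using q(1) j(2) by blast
  qed
  obtain k' where k': "k = Suc k'" using conn(2) by (cases k) auto
  have dg: "d \<in> Dg" using conn DD by auto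
  have gk: "(g^^k') (g d) \<in> D" using conn(3) k' by (simp add: funpow_Suc_right del: funpow.simps)
  show ?thesis
  proof (cases "g d = e")
    case False
    then show ?thesis using C[of "g d" k'] cc conn(1) gm dg gk fj by blast
  next
    case True
    have ge: "g e \<noteq> e" using dd conn(1) True by auto
    have "k' \<noteq> 0"
    proof
      assume "k' = 0"
      then have "e \<in> D" using gk True by simp
      then show False using ef DD by auto
    qed
    then obtain k'' where k'': "k' = Suc k''" by (cases k') auto
    have "(g^^k'') (g e) \<in> D" using gk True k'' by (simp add: funpow_Suc_right del: funpow.simps)
    then show ?thesis using C[of "g e" k''] cc ge gm eg fj by blast
  qed
qed

locale ietc =
  fixes n :: nat and a :: "nat \<Rightarrow> real" and \<tau> :: "nat \<Rightarrow> nat"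
  assumes n2: "n \<ge> 2"
    and apos: "\<forall>i\<in>{1..n}. a i > 0"
    and asum: "(\<Sum>i=1..n. a i) = 1"
    and perm: "\<tau> permutes {1..n}"
begin

abbreviation "b \<equiv> bpt a"
abbreviation "c \<equiv> btau a \<tau>"

lemma b0: "b 0 = 0" by (simp add: bpt_def)
lemma bn: "b n = 1" using asum by (simp add: bpt_def)
lemma bSuc: "b (Suc i) = b i + a (Suc i)" by (simp add: bpt_def)
lemma c0: "c 0 = 0" by (simp add: btau_def)
lemma cSuc: "c (Suc i) = c i + a (inv \<tau> (Suc i))" by (simp add: btau_def)

lemma tau_in: "\<tau> i \<in> {1..n} \<longleftrightarrow> i \<in> {1..n}"
  using permutes_in_image[OF perm] by blast
lemma itau_in: "inv \<tau> i \<in> {1..n} \<longleftrightarrow> i \<in> {1..n}"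
  using permutes_in_image[OF permutes_inv[OF perm]] by blast
lemma tau_inv1: "\<tau> (inv \<tau> x) = x" using permutes_inverses[OF perm] by blast
lemma tau_inv2: "inv \<tau> (\<tau> x) = x" using permutes_inverses[OF perm] by blast

lemma cn: "c n = 1"
proof -
  have "c n = (\<Sum>j=1..n. a (inv \<tau> j))" by (simp add: btau_def)
  also have "\<dots> = (\<Sum>i=1..n. a i)"
    by (rule sum.reindex_bij_betw[OF permutes_imp_bij[OF permutes_inv[OF perm]]])
  finally show ?thesis using asum by simp
qed

lemma bmono: "i < j \<Longrightarrow> j \<le> n \<Longrightarrow> b i < b j"
proof (induction j)
  case 0 then show ?case by simp
next
  case (Suc j)
  have "a (Suc j) > 0" using apos Suc.prems by auto
  then have "b j < b (Suc j)" by (simp add: bSuc)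
  then show ?case using Suc by (cases "i = j") auto
qed

lemma cmono: "i < j \<Longrightarrow> j \<le> n \<Longrightarrow> c i < c j"
proof (induction j)
  case 0 then show ?case by simp
next
  case (Suc j)
  have "inv \<tau> (Suc j) \<in> {1..n}" using itau_in Suc.prems by auto
  then have "a (inv \<tau> (Suc j)) > 0" using apos by auto
  then have "c j < c (Suc j)" by (simp add: cSuc)
  then show ?case using Suc by (cases "i = j") auto
qed

lemma b_less_iff: "i \<le> n \<Longrightarrow> j \<le> n \<Longrightarrow> b i < b j \<longleftrightarrow> i < j"
  using bmono by (metis less_asym linorder_neqE_nat)
lemma b_le_iff: "i \<le> n \<Longrightarrow> j \<le> n \<Longrightarrow> b i \<le> b j \<longleftrightarrow> i \<le> j"
  using b_less_iff by (meson not_le)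
lemma b_eq_iff: "i \<le> n \<Longrightarrow> j \<le> n \<Longrightarrow> b i = b j \<longleftrightarrow> i = j"
  using b_le_iff[of i j] b_le_iff[of j i] by auto
lemma c_less_iff: "i \<le> n \<Longrightarrow> j \<le> n \<Longrightarrow> c i < c j \<longleftrightarrow> i < j"
  using cmono by (metis less_asym linorder_neqE_nat)
lemma c_le_iff: "i \<le> n \<Longrightarrow> j \<le> n \<Longrightarrow> c i \<le> c j \<longleftrightarrow> i \<le> j"
  using c_less_iff by (meson not_le)
lemma c_eq_iff: "i \<le> n \<Longrightarrow> j \<le> n \<Longrightarrow> c i = c j \<longleftrightarrow> i = j"
  using c_le_iff[of i j] c_le_iff[of j i] by auto

lemma cstep: "i \<in> {1..n} \<Longrightarrow> c (\<tau> i) = c (\<tau> i - 1) + a i"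
proof -
  assume i: "i \<in> {1..n}"
  then have "\<tau> i \<ge> 1" using tau_in by auto
  then have "\<tau> i = Suc (\<tau> i - 1)" by simp
  then have "c (\<tau> i) = c (\<tau> i - 1) + a (inv \<tau> (\<tau> i))" by (metis cSuc)
  then show ?thesis by (simp add: tau_inv2)
qed

lemma bstep: "i \<in> {1..n} \<Longrightarrow> b i = b (i - 1) + a i"
  using bSuc[of "i-1"] by (cases i) auto

lemma J_exists: "0 \<le> x \<Longrightarrow> x < 1 \<Longrightarrow> \<exists>i\<in>{1..n}. b (i-1) \<le> x \<and> x < b i"
proof -
  assume x: "0 \<le> x" "x < 1"
  define i where "i = (LEAST i. x < b i)"
  have ex: "x < b n" using x bn by simp
  have xi: "x < b i" unfolding i_def by (rule LeastI[of _ n], rule ex)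
  have "i \<le> n" unfolding i_def by (rule Least_le, rule ex)
  moreover have "i \<noteq> 0"
  proof
    assume "i = 0" then show False using xi x b0 by simp
  qed
  moreover have "\<not> x < b (i-1)" unfolding i_def by (rule not_less_Least) (use \<open>i \<noteq> 0\<close> i_def in auto)
  ultimately show ?thesis using xi by (intro bexI[of _ i]) auto
qed

lemma Jt_exists: "0 < x \<Longrightarrow> x \<le> 1 \<Longrightarrow> \<exists>i\<in>{1..n}. b (i-1) < x \<and> x \<le> b i"
proof -
  assume x: "0 < x" "x \<le> 1"
  define i where "i = (LEAST i. x \<le> b i)"
  have ex: "x \<le> b n" using x bn by simp
  have xi: "x \<le> b i" unfolding i_def by (rule LeastI[of _ n], rule ex)
  have "i \<le> n" unfolding i_def by (rule Least_le, rule ex)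
  moreover have "i \<noteq> 0"
  proof
    assume "i = 0" then show False using xi x b0 by simp
  qed
  moreover have "\<not> x \<le> b (i-1)" unfolding i_def by (rule not_less_Least) (use \<open>i \<noteq> 0\<close> i_def in auto)
  ultimately show ?thesis using xi by (intro bexI[of _ i]) auto
qed

lemma T_J: assumes i: "i \<in> {1..n}" and x: "b (i-1) \<le> x" "x < b i"
  shows "iet n a \<tau> x = x - b (i-1) + c (\<tau> i - 1)"
proof -
  have "b 0 \<le> b (i-1)" using i b_le_iff by auto
  moreover have "b i \<le> b n" using i b_le_iff by auto
  ultimately have x01: "0 \<le> x" "x < 1" using x b0 bn by auto
  have "(THE i. i \<in> {1..n} \<and> b (i-1) \<le> x \<and> x < b i) = i"
  proof (rule the_equality)
    show "i \<in> {1..n} \<and> b (i-1) \<le> x \<and> x < b i" using i x by auto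
  next
    fix j assume j: "j \<in> {1..n} \<and> b (j-1) \<le> x \<and> x < b j"
    have "\<not> j < i"
    proof
      assume "j < i"
      then have "b j \<le> b (i-1)" using i j b_le_iff by auto
      then show False using j x by auto
    qed
    moreover have "\<not> i < j"
    proof
      assume "i < j"
      then have "b i \<le> b (j-1)" using i j b_le_iff by auto
      then show False using j x by auto
    qed
    ultimately show "j = i" by auto
  qed
  then show ?thesis using x01 by (simp add: iet_def Let_def)
qed

lemma Tt_J: assumes i: "i \<in> {1..n}" and x: "b (i-1) < x" "x \<le> b i"
  shows "iet_dual n a \<tau> x = x - b (i-1) + c (\<tau> i - 1)"
proof -
  have "b 0 \<le> b (i-1)" using i b_le_iff by auto
  moreover have "b i \<le> b n" using i b_le_iff by auto
  ultimately have x01: "0 < x" "x \<le> 1" using x b0 bn by auto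
  have "(THE i. i \<in> {1..n} \<and> b (i-1) < x \<and> x \<le> b i) = i"
  proof (rule the_equality)
    show "i \<in> {1..n} \<and> b (i-1) < x \<and> x \<le> b i" using i x by auto
  next
    fix j assume j: "j \<in> {1..n} \<and> b (j-1) < x \<and> x \<le> b j"
    have "\<not> j < i"
    proof
      assume "j < i"
      then have "b j \<le> b (i-1)" using i j b_le_iff by auto
      then show False using j x by auto
    qed
    moreover have "\<not> i < j"
    proof
      assume "i < j"
      then have "b i \<le> b (j-1)" using i j b_le_iff by auto
      then show False using j x by auto
    qed
    ultimately show "j = i" by auto
  qed
  then show ?thesis using x01 by (simp add: iet_dual_def Let_def)
qed

lemma T_range: "0 \<le> x \<Longrightarrow> x < 1 \<Longrightarrow> 0 \<le> iet n a \<tau> x \<and> iet n a \<tau> x < 1"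
proof -
  assume x: "0 \<le> x" "x < 1"
  obtain i where i: "i \<in> {1..n}" "b (i-1) \<le> x" "x < b i" using J_exists[OF x] by blast
  have t: "\<tau> i \<in> {1..n}" using i tau_in by auto
  have "c 0 \<le> c (\<tau> i - 1)" using t c_le_iff by auto
  moreover have "c (\<tau> i) \<le> c n" using t c_le_iff by auto
  ultimately show ?thesis using T_J[OF i] cstep[OF i(1)] bstep[OF i(1)] i c0 cn by auto
qed

lemma Tt_range: "0 < x \<Longrightarrow> x \<le> 1 \<Longrightarrow> 0 < iet_dual n a \<tau> x \<and> iet_dual n a \<tau> x \<le> 1"
proof -
  assume x: "0 < x" "x \<le> 1"
  obtain i where i: "i \<in> {1..n}" "b (i-1) < x" "x \<le> b i" using Jt_exists[OF x] by blast
  have t: "\<tau> i \<in> {1..n}" using i tau_in by auto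
  have "c 0 \<le> c (\<tau> i - 1)" using t c_le_iff by auto
  moreover have "c (\<tau> i) \<le> c n" using t c_le_iff by auto
  ultimately show ?thesis using Tt_J[OF i] cstep[OF i(1)] bstep[OF i(1)] i c0 cn by auto
qed

lemma T_b: "i \<in> {1..n} \<Longrightarrow> iet n a \<tau> (b (i-1)) = c (\<tau> i - 1)"
  using T_J[of i "b (i-1)"] b_less_iff[of "i-1" i] by auto

lemma Tt_b: "i \<in> {1..n} \<Longrightarrow> iet_dual n a \<tau> (b i) = c (\<tau> i)"
  using Tt_J[of i "b i"] b_less_iff[of "i-1" i] cstep[of i] bstep[of i] by auto

lemma D_sub: "x \<in> Dset n a \<Longrightarrow> 0 < x \<and> x < 1"
  unfolding Dset_def using b_less_iff[of 0] b_less_iff[of _ n] b0 bn by auto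

lemma agree: "0 < x \<Longrightarrow> x < 1 \<Longrightarrow> x \<notin> Dset n a \<Longrightarrow> iet n a \<tau> x = iet_dual n a \<tau> x"
proof -
  assume x: "0 < x" "x < 1" "x \<notin> Dset n a"
  have x0: "0 \<le> x" using x by simp
  obtain i where i: "i \<in> {1..n}" "b (i-1) \<le> x" "x < b i" using J_exists[OF x0 x(2)] by blast
  have "x \<noteq> b (i-1)"
  proof
    assume h: "x = b (i-1)"
    show False
    proof (cases "i = 1")
      case True then show False using h x b0 by simp
    next
      case False
      then have "i - 1 \<in> {1..n-1}" using i by auto
      then show False using h x(3) unfolding Dset_def by auto
    qed
  qed
  then show ?thesis using T_J[OF i] Tt_J[of i x] i by auto
qed

lemma dir1_c: "z \<in> Dset n a \<union> {1} \<Longrightarrow> iet_dual n a \<tau> z \<noteq> 1 \<Longrightarrow>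
   \<exists>q\<in>Dset n a. \<exists>j\<in>{1::nat,2}. (iet n a \<tau> ^^ j) q = iet_dual n a \<tau> z"
proof -
  assume z: "z \<in> Dset n a \<union> {1}" and ne: "iet_dual n a \<tau> z \<noteq> 1"
  obtain i where i: "i \<in> {1..n}" "z = b i"
  proof (cases "z = 1")
    case True then show ?thesis using that[of n] bn n2 by auto
  next
    case False
    then obtain k where "k \<in> {1..n-1}" "z = b k" using z unfolding Dset_def by auto
    then show ?thesis using that[of k] by auto
  qed
  have Tz: "iet_dual n a \<tau> z = c (\<tau> i)" using Tt_b i by simp
  have ti: "\<tau> i \<in> {1..n}" using i tau_in by auto
  have tin: "\<tau> i \<noteq> n" using ne Tz cn by auto
  define l where "l = inv \<tau> (\<tau> i + 1)"
  have l: "l \<in> {1..n}" "\<tau> l = \<tau> i + 1" using itau_in ti tin tau_inv1 unfolding l_def by auto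
  have Tl: "iet n a \<tau> (b (l-1)) = c (\<tau> i)" using T_b[OF l(1)] l by simp
  show ?thesis
  proof (cases "l = 1")
    case False
    then have "l - 1 \<in> {1..n-1}" using l by auto
    then have "b (l-1) \<in> Dset n a" unfolding Dset_def by (rule imageI)
    then show ?thesis using Tl Tz by (intro bexI[of _ "b (l-1)"] bexI[of _ 1]) auto
  next
    case True
    define m where "m = inv \<tau> 1"
    have m: "m \<in> {1..n}" "\<tau> m = 1" using itau_in tau_inv1 n2 unfolding m_def by auto
    have "m \<noteq> 1" using m l True ti by auto
    then have "m - 1 \<in> {1..n-1}" using m by auto
    then have mD: "b (m-1) \<in> Dset n a" unfolding Dset_def by (rule imageI)
    have "iet n a \<tau> (b (m-1)) = b 0" using T_b[OF m(1)] m c0 b0 by simp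
    moreover have "iet n a \<tau> (b 0) = c (\<tau> i)" using Tl True by simp
    ultimately have "(iet n a \<tau> ^^ 2) (b (m-1)) = c (\<tau> i)" by (simp add: numeral_2_eq_2)
    then show ?thesis using mD Tz by (intro bexI[of _ "b (m-1)"] bexI[of _ 2]) auto
  qed
qed

lemma dir1_d: "z \<in> Dset n a \<Longrightarrow> iet_dual n a \<tau> z = 1 \<Longrightarrow> iet_dual n a \<tau> 1 \<noteq> 1"
proof -
  assume z: "z \<in> Dset n a" and e: "iet_dual n a \<tau> z = 1"
  obtain i where i: "i \<in> {1..n-1}" "z = b i" using z unfolding Dset_def by auto
  have i': "i \<in> {1..n}" using i by auto
  have "c (\<tau> i) = c n" using Tt_b[OF i'] e i cn by simp
  then have "\<tau> i = n" using c_eq_iff tau_in i' by auto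
  moreover have nn: "n \<in> {1..n}" using n2 by auto
  ultimately have "\<tau> n \<noteq> n"
  proof -
    assume ti: "\<tau> i = n"
    show "\<tau> n \<noteq> n"
    proof
      assume "\<tau> n = n"
      then have "inv \<tau> (\<tau> n) = inv \<tau> (\<tau> i)" using ti by simp
      then have "n = i" by (simp add: tau_inv2)
      then show False using i by auto
    qed
  qed
  then have "c (\<tau> n) \<noteq> c n" using c_eq_iff tau_in nn by auto
  then show ?thesis using Tt_b[OF nn] bn cn by simp
qed

lemma dir2_c: "z \<in> Dset n a \<union> {0} \<Longrightarrow> iet n a \<tau> z \<noteq> 0 \<Longrightarrow>
   \<exists>q\<in>Dset n a. \<exists>j\<in>{1::nat,2}. (iet_dual n a \<tau> ^^ j) q = iet n a \<tau> z"
proof -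
  assume z: "z \<in> Dset n a \<union> {0}" and ne: "iet n a \<tau> z \<noteq> 0"
  obtain i where i: "i \<in> {1..n}" "z = b (i-1)"
  proof -
    show ?thesis
    proof (cases "z = 0")
      case True then show ?thesis using that[of 1] n2 b0 by auto
    next
      case False
      then obtain k where "k \<in> {1..n-1}" "z = b k" using z unfolding Dset_def by auto
      then show ?thesis using that[of "k+1"] by auto
    qed
  qed
  have Tz: "iet n a \<tau> z = c (\<tau> i - 1)" using T_b i by simp
  have ti: "\<tau> i \<in> {1..n}" using i tau_in by auto
  have ti1: "\<tau> i \<noteq> 1" using ne Tz c0 by auto
  define l where "l = inv \<tau> (\<tau> i - 1)"
  have l: "l \<in> {1..n}" "\<tau> l = \<tau> i - 1" using itau_in ti ti1 tau_inv1 unfolding l_def by auto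
  have Tl: "iet_dual n a \<tau> (b l) = c (\<tau> i - 1)" using Tt_b[OF l(1)] l by simp
  show ?thesis
  proof (cases "l = n")
    case False
    then have "l \<in> {1..n-1}" using l by auto
    then have "b l \<in> Dset n a" unfolding Dset_def by (rule imageI)
    then show ?thesis using Tl Tz by (intro bexI[of _ "b l"] bexI[of _ 1]) auto
  next
    case True
    define m where "m = inv \<tau> n"
    have nn: "n \<in> {1..n}" using n2 by auto
    have m: "m \<in> {1..n}" "\<tau> m = n" using itau_in tau_inv1 nn unfolding m_def by auto
    have "m \<noteq> n" using m l True ti by auto
    then have "m \<in> {1..n-1}" using m by auto
    then have mD: "b m \<in> Dset n a" unfolding Dset_def by (rule imageI)
    have "iet_dual n a \<tau> (b m) = b n" using Tt_b[OF m(1)] m cn bn by simp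
    moreover have "iet_dual n a \<tau> (b n) = c (\<tau> i - 1)" using Tl True by simp
    ultimately have "(iet_dual n a \<tau> ^^ 2) (b m) = c (\<tau> i - 1)" by (simp add: numeral_2_eq_2)
    then show ?thesis using mD Tz by (intro bexI[of _ "b m"] bexI[of _ 2]) auto
  qed
qed

lemma dir2_d: "z \<in> Dset n a \<Longrightarrow> iet n a \<tau> z = 0 \<Longrightarrow> iet n a \<tau> 0 \<noteq> 0"
proof -
  assume z: "z \<in> Dset n a" and e: "iet n a \<tau> z = 0"
  obtain k where k: "k \<in> {1..n-1}" "z = b k" using z unfolding Dset_def by auto
  have i': "k+1 \<in> {1..n}" using k by auto
  have "c (\<tau> (k+1) - 1) = c 0" using T_b[OF i'] e k c0 by simp
  moreover have "\<tau> (k+1) - 1 \<le> n" using tau_in[of "k+1"] i' by auto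
  ultimately have "\<tau> (k+1) - 1 = 0" using c_eq_iff[of "\<tau> (k+1) - 1" 0] by auto
  moreover have "\<tau> (k+1) \<ge> 1" using tau_in[of "k+1"] i' by simp
  ultimately have t1: "\<tau> (k+1) = 1" by (metis diff_is_0_eq le_antisym)
  have nn: "1 \<in> {1..n}" using n2 by auto
  have "\<tau> 1 \<noteq> 1"
  proof
    assume "\<tau> 1 = 1"
    then have "\<tau> 1 = \<tau> (k+1)" using t1 by (rule trans[OF _ sym])
    then have "inv \<tau> (\<tau> 1) = inv \<tau> (\<tau> (k+1))" by (rule arg_cong)
    then have "1 = k + 1" by (simp add: tau_inv2)
    then show False using k by auto
  qed
  then have "\<tau> 1 - 1 \<noteq> 0" using tau_in[of 1] nn by auto
  moreover have "\<tau> 1 - 1 \<le> n" using tau_in[of 1] nn by auto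
  ultimately have "c (\<tau> 1 - 1) \<noteq> c 0" using c_eq_iff[of "\<tau> 1 - 1" 0] by auto
  then show ?thesis using T_b[OF nn] b0 c0 by simp
qed

end

lemma conn_iff: "(\<forall>k::nat. k \<ge> 1 \<longrightarrow> D \<inter> (f ^^ k) ` D = {}) \<longleftrightarrow> \<not> (\<exists>d\<in>D. \<exists>k\<ge>1. (f^^k) d \<in> D)"
  by blast

theorem lemma3p3:
  fixes n :: nat and a :: "nat \<Rightarrow> real" and \<tau> :: "nat \<Rightarrow> nat"
  assumes "n \<ge> 2"
    and "\<forall>i\<in>{1..n}. a i > 0"
    and "(\<Sum>i=1..n. a i) = 1"
    and "\<tau> permutes {1..n}"
  shows "(\<forall>k::nat. k \<ge> 1 \<longrightarrow> Dset n a \<inter> ((iet n a \<tau>) ^^ k) ` Dset n a = {})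
     \<longleftrightarrow> (\<forall>k::nat. k \<ge> 1 \<longrightarrow> Dset n a \<inter> ((iet_dual n a \<tau>) ^^ k) ` Dset n a = {})"
proof -
  interpret ietc n a \<tau> using assms by unfold_locales auto
  let ?D = "Dset n a" and ?T = "iet n a \<tau>" and ?S = "iet_dual n a \<tau>"
  have s1: "?D \<subseteq> {0..<1}" "?D \<subseteq> {0<..1}"
  proof -
    show "?D \<subseteq> {0..<1}"
    proof
      fix x assume "x \<in> ?D" then show "x \<in> {0..<1}" using D_sub[of x] by simp
    qed
    show "?D \<subseteq> {0<..1}"
    proof
      fix x assume "x \<in> ?D" then show "x \<in> {0<..1}" using D_sub[of x] by simp
    qed
  qed
  have Tm: "\<forall>x\<in>{0..<1}. ?T x \<in> {0..<1}" using T_range by simp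
  have Sm: "\<forall>x\<in>{0<..1}. ?S x \<in> {0<..1}" using Tt_range by simp
  have ag1: "\<forall>x\<in>{0<..1} - ?D - {1}. ?T x = ?S x" using agree by auto
  have ag2: "\<forall>x\<in>{0..<1} - ?D - {0}. ?S x = ?T x" using agree by force
  have c1: "\<forall>z\<in>?D\<union>{1}. ?S z \<noteq> 1 \<longrightarrow> (\<exists>q\<in>?D. \<exists>j\<in>{1,2}. (?T^^j) q = ?S z)"
    using dir1_c by blast
  have c2: "\<forall>z\<in>?D\<union>{0}. ?T z \<noteq> 0 \<longrightarrow> (\<exists>q\<in>?D. \<exists>j\<in>{1,2}. (?S^^j) q = ?T z)"
    using dir2_c by blast
  have d1: "\<forall>z\<in>?D. ?S z = 1 \<longrightarrow> ?S 1 \<noteq> 1" using dir1_d by blast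
  have d2: "\<forall>z\<in>?D. ?T z = 0 \<longrightarrow> ?T 0 \<noteq> 0" using dir2_d by blast
  have A: "\<exists>d\<in>?D. \<exists>k\<ge>1. (?T^^k) d \<in> ?D" if "d \<in> ?D" "k \<ge> 1" "(?S^^k) d \<in> ?D" for d k
    by (rule abstract_conn[OF s1(1) s1(2) Sm Tm _ _ ag1 c1 d1 that]) auto
  have B: "\<exists>d\<in>?D. \<exists>k\<ge>1. (?S^^k) d \<in> ?D" if "d \<in> ?D" "k \<ge> 1" "(?T^^k) d \<in> ?D" for d k
    by (rule abstract_conn[OF s1(2) s1(1) Tm Sm _ _ ag2 c2 d2 that]) auto
  show ?thesis unfolding conn_iff using A B by blast
qed

end
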